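(* Let $S$ be a species tree, $(T,\sigma)$ a gene tree, and $\mu:V(T)\to V(S)\cup E(S)$ a reconciliation map without horizontal gene transfer (satisfying (R0), (R1), (R2), (R3.i), (R3.ii)) that in addition satisfies axiom (R4). Let $A\subseteq L(T)$ with $|\sigma(A)|\geq 2$. If $\operatorname{lca}_S(\sigma(A))\prec_S\mu(\operatorname{lca}_T(A))$, then $\operatorname{lca}_T(A)$ is a duplication event, i.e., $\mu(\operatorname{lca}_T(A))\in E(S)$.
   Context: A planted phylogenetic tree $T$ has a distinguished leaf $0_T$ (the planted root) whose unique neighbour $\rho_T$ is the root; every other non-leaf vertex has at least two children. $L(T)$ denotes the leaves other than $0_T$. For vertices, $a\preceq_T b$ means $b$ lies on the path from $a$ to $0_T$; $\operatorname{lca}_T(A)$ is the $\preceq_T$-minimal vertex that is $\succeq_T$ every element of $A$. A species tree $S$ is a planted phylogenetic tree with planted root $0_S$, root $\rho_S$ and leaf set $\mathscr{S}$ (the species); $V^0(S)$ denotes the inner vertices of $S$ (neither leaves nor $0_S$). The order $\preceq_S$ is extended to $V(S)\cup E(S)$ by regarding each edge $e=pq$ ($q$ a child of $p$) as lying strictly between $q$ and $p$: $q\prec_S e\prec_S p$, a vertex $w$ satisfies $w\prec_S e$ iff $w\preceq_S q$ and $e\prec_S w$ iff $p\preceq_S w$, and for edges $e=pq,e'=p'q'$, $e\prec_S e'$ iff $p\preceq_S q'$; $\operatorname{lca}_S$ of elements of $V(S)\cup E(S)$ is the $\preceq_S$-minimal vertex above all of them. A gene tree $(T,\sigma)$ is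 a planted phylogenetic tree with $\sigma:L(T)\to\mathscr{S}$. A reconciliation map without horizontal gene transfer is $\mu:V(T)\to V(S)\cup E(S)$ with: (R0) $\mu(v)=0_S$ iff $v=0_T$; (R1) $\mu(v)=\sigma(v)$ for $v\in L(T)$; (R2) $v\prec_T w\Rightarrow\mu(v)\preceq_S\mu(w)$; and for each $v$ with $\mu(v)\in V^0(S)$: (R3.i) $\mu(v)=\operatorname{lca}_S(\mu(v'),\mu(v''))$ for at least two distinct children $v',v''$ of $v$; (R3.ii) $\mu(v'),\mu(v'')$ are $\preceq_S$-incomparable for any two distinct children $v',v''$ of $v$. Axiom (R4): for leaves $x,y,z$ of $T$, if $\mu(\operatorname{lca}_T(x,y))=\mu(\operatorname{lca}_T(x,z))\in V^0(S)$ then $\operatorname{lca}_S(\sigma(x),\sigma(y))=\operatorname{lca}_S(\sigma(x),\sigma(z))$. A vertex $v$ of $T$ is a duplication if $\mu(v)\in E(S)$. *)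

theory Defs
  imports Main
begin

text \<open>Rooted trees are given by a finite vertex set V, a set E of directed
edges (parent, child) and a distinguished vertex r0 (the planted root 0_T).\<close>

definition children :: "('v \<times> 'v) set \<Rightarrow> 'v \<Rightarrow> 'v set" where
  "children E v = {c. (v, c) \<in> E}"

text \<open>Leaves other than the planted root: vertices without children
(the planted root has exactly one child, so it is excluded).\<close>
definition leaves :: "'v set \<Rightarrow> ('v \<times> 'v) set \<Rightarrow> 'v set" where
  "leaves V E = {v \<in> V. children E v = {}}"

definition planted_phylo :: "'v set \<Rightarrow> ('v \<times> 'v) set \<Rightarrow> 'v \<Rightarrow> bool" where
  "planted_phylo V E r0 \<longleftrightarrow>
     finite V \<and> E \<subseteq> V \<times> V \<and> r0 \<in> V \<and>
     (\<forall>v\<in>V. (r0, v) \<in> E\<^sup>*) \<and>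
     (\<forall>p. (p, r0) \<notin> E) \<and>
     (\<forall>v\<in>V - {r0}. \<exists>!p. (p, v) \<in> E) \<and>
     card (children E r0) = 1 \<and>
     (\<forall>v\<in>V - {r0}. children E v \<noteq> {} \<longrightarrow> card (children E v) \<ge> 2)"

definition tree_le :: "('v \<times> 'v) set \<Rightarrow> 'v \<Rightarrow> 'v \<Rightarrow> bool" where
  "tree_le E a b \<longleftrightarrow> (b, a) \<in> E\<^sup>*"

definition tree_less :: "('v \<times> 'v) set \<Rightarrow> 'v \<Rightarrow> 'v \<Rightarrow> bool" where
  "tree_less E a b \<longleftrightarrow> tree_le E a b \<and> a \<noteq> b"

definition lca :: "'v set \<Rightarrow> ('x \<Rightarrow> 'v \<Rightarrow> bool) \<Rightarrow> ('v \<Rightarrow> 'v \<Rightarrow> bool) \<Rightarrow> 'x set \<Rightarrow> 'v" where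
  "lca V le levv X = (THE w. w \<in> V \<and> (\<forall>x\<in>X. le x w) \<and>
       (\<forall>w'\<in>V. (\<forall>x\<in>X. le x w') \<longrightarrow> levv w w'))"

definition lcaT :: "'v set \<Rightarrow> ('v \<times> 'v) set \<Rightarrow> 'v set \<Rightarrow> 'v" where
  "lcaT V E X = lca V (tree_le E) (tree_le E) X"

text \<open>Elements of V(S) \<union> E(S): vertices and edges (Ed p q with q a child of p).\<close>
datatype 's elem = Vx 's | Ed 's 's

fun elem_le :: "('s \<times> 's) set \<Rightarrow> 's elem \<Rightarrow> 's elem \<Rightarrow> bool" where
  "elem_le E (Vx a) (Vx b) = tree_le E a b"
| "elem_le E (Vx w) (Ed p q) = tree_le E w q"
| "elem_le E (Ed p q) (Vx w) = tree_le E p w"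
| "elem_le E (Ed p q) (Ed p' q') = ((p = p' \<and> q = q') \<or> tree_le E p q')"

definition elem_less :: "('s \<times> 's) set \<Rightarrow> 's elem \<Rightarrow> 's elem \<Rightarrow> bool" where
  "elem_less E x y \<longleftrightarrow> elem_le E x y \<and> x \<noteq> y"

definition incomparable :: "('s \<times> 's) set \<Rightarrow> 's elem \<Rightarrow> 's elem \<Rightarrow> bool" where
  "incomparable E x y \<longleftrightarrow> \<not> elem_le E x y \<and> \<not> elem_le E y x"

definition lcaS :: "'s set \<Rightarrow> ('s \<times> 's) set \<Rightarrow> 's elem set \<Rightarrow> 's" where
  "lcaS V E X = lca V (\<lambda>x w. elem_le E x (Vx w)) (tree_le E) X"

definition vertex_elems :: "'s set \<Rightarrow> 's elem set" where
  "vertex_elems V = Vx ` V"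

definition edge_elems :: "('s \<times> 's) set \<Rightarrow> 's elem set" where
  "edge_elems E = {Ed p q | p q. (p, q) \<in> E}"

definition inner :: "'s set \<Rightarrow> ('s \<times> 's) set \<Rightarrow> 's \<Rightarrow> 's set" where
  "inner V E r0 = V - leaves V E - {r0}"

definition gene_tree :: "'g set \<Rightarrow> ('g \<times> 'g) set \<Rightarrow> 'g \<Rightarrow> ('g \<Rightarrow> 's) \<Rightarrow> 's set \<Rightarrow> bool" where
  "gene_tree VT ET r0T \<sigma> Spec \<longleftrightarrow> planted_phylo VT ET r0T \<and> (\<forall>v\<in>leaves VT ET. \<sigma> v \<in> Spec)"

definition reconc_map ::
  "'g set \<Rightarrow> ('g \<times> 'g) set \<Rightarrow> 'g \<Rightarrow> ('g \<Rightarrow> 's) \<Rightarrow>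
   's set \<Rightarrow> ('s \<times> 's) set \<Rightarrow> 's \<Rightarrow> ('g \<Rightarrow> 's elem) \<Rightarrow> bool" where
  "reconc_map VT ET r0T \<sigma> VS ES r0S \<mu> \<longleftrightarrow>
     (\<forall>v\<in>VT. \<mu> v \<in> vertex_elems VS \<union> edge_elems ES) \<and>
     (\<forall>v\<in>VT. \<mu> v = Vx r0S \<longleftrightarrow> v = r0T) \<and>
     (\<forall>v\<in>leaves VT ET. \<mu> v = Vx (\<sigma> v)) \<and>
     (\<forall>v\<in>VT. \<forall>w\<in>VT. tree_less ET v w \<longrightarrow> elem_le ES (\<mu> v) (\<mu> w)) \<and>
     (\<forall>v\<in>VT. (\<exists>x\<in>inner VS ES r0S. \<mu> v = Vx x) \<longrightarrow>
        (\<exists>v' v''. v' \<in> children ET v \<and> v'' \<in> children ET v \<and> v' \<noteq> v'' \<and>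
            \<mu> v = Vx (lcaS VS ES {\<mu> v', \<mu> v''})) \<and>
        (\<forall>v'\<in>children ET v. \<forall>v''\<in>children ET v. v' \<noteq> v'' \<longrightarrow>
            incomparable ES (\<mu> v') (\<mu> v'')))"

definition axiom_R4 ::
  "'g set \<Rightarrow> ('g \<times> 'g) set \<Rightarrow> 'g \<Rightarrow> ('g \<Rightarrow> 's) \<Rightarrow>
   's set \<Rightarrow> ('s \<times> 's) set \<Rightarrow> 's \<Rightarrow> ('g \<Rightarrow> 's elem) \<Rightarrow> bool" where
  "axiom_R4 VT ET r0T \<sigma> VS ES r0S \<mu> \<longleftrightarrow>
     (\<forall>x\<in>leaves VT ET. \<forall>y\<in>leaves VT ET. \<forall>z\<in>leaves VT ET.
        (\<mu> (lcaT VT ET {x, y}) = \<mu> (lcaT VT ET {x, z}) \<and>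
         \<mu> (lcaT VT ET {x, y}) \<in> Vx ` inner VS ES r0S) \<longrightarrow>
        lcaS VS ES {Vx (\<sigma> x), Vx (\<sigma> y)} = lcaS VS ES {Vx (\<sigma> x), Vx (\<sigma> z)})"

end

theory Submission
  imports Defs
begin

lemma elem_le_refl: "elem_le E e e"
  by (cases e) (auto simp: tree_le_def)

locale ptree =
  fixes V :: "'v set" and E :: "('v \<times> 'v) set" and r0 :: 'v
  assumes pp: "planted_phylo V E r0"
begin

lemma finV: "finite V" using pp by (simp add: planted_phylo_def)
lemma EV: "E \<subseteq> V \<times> V" using pp by (simp add: planted_phylo_def)
lemma r0V: "r0 \<in> V" using pp by (simp add: planted_phylo_def)
lemma reach: "v \<in> V \<Longrightarrow> (r0, v) \<in> E\<^sup>*" using pp by (simp add: planted_phylo_def)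
lemma noparent: "(p, r0) \<notin> E" using pp by (simp add: planted_phylo_def)
lemma uniqp: assumes "(p, a) \<in> E" "(p', a) \<in> E" shows "p = p'"
proof -
  have "a \<in> V" using assms EV by auto
  moreover have "a \<noteq> r0" using assms noparent by auto
  ultimately have "\<exists>!p. (p, a) \<in> E" using pp by (simp add: planted_phylo_def)
  then show ?thesis using assms by auto
qed

lemma acyc: "(a, a) \<notin> E\<^sup>+"
proof
  assume a: "(a, a) \<in> E\<^sup>+"
  have "a \<in> V" using trancl_subset_Sigma[OF EV] a by auto
  then have "(r0, a) \<in> E\<^sup>*" by (rule reach)
  then show False using a
  proof (induction rule: rtrancl_induct)
    case base
    then show ?case using noparent by (auto dest: tranclD2)
  next
    case (step y z)
    from step.prems obtain p where p: "(z, p) \<in> E\<^sup>*" "(p, z) \<in> E" by (auto dest: tranclD2)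
    have "p = y" using uniqp p(2) step.hyps(2) by auto
    then have "(y, y) \<in> E\<^sup>+" using step.hyps(2) p(1) by (auto intro: rtrancl_into_trancl2)
    then show ?case using step.IH by auto
  qed
qed

lemma antisym: "(a, b) \<in> E\<^sup>* \<Longrightarrow> (b, a) \<in> E\<^sup>* \<Longrightarrow> a = b"
proof (rule ccontr)
  assume h: "(a, b) \<in> E\<^sup>*" "(b, a) \<in> E\<^sup>*" "a \<noteq> b"
  then have "(a, b) \<in> E\<^sup>+" by (auto dest: rtranclD)
  then have "(a, a) \<in> E\<^sup>+" using h(2) by (rule trancl_rtrancl_trancl)
  then show False using acyc by blast
qed

lemma chain: "(b, a) \<in> E\<^sup>* \<Longrightarrow> (c, a) \<in> E\<^sup>* \<Longrightarrow> (b, c) \<in> E\<^sup>* \<or> (c, b) \<in> E\<^sup>*"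
proof (induction arbitrary: c rule: rtrancl_induct)
  case base
  then show ?case by auto
next
  case (step y z)
  show ?case
  proof (cases "c = z")
    case True
    then show ?thesis using step.hyps by auto
  next
    case False
    then have "(c, z) \<in> E\<^sup>+" using step.prems by (auto dest: rtranclD)
    then obtain p where p: "(c, p) \<in> E\<^sup>*" "(p, z) \<in> E" by (auto dest: tranclD2)
    have "p = y" using uniqp p(2) step.hyps(2) by auto
    then show ?thesis using step.IH p(1) by auto
  qed
qed

lemma last_edge: "(v, c) \<in> E \<Longrightarrow> (b, c) \<in> E\<^sup>+ \<Longrightarrow> (b, v) \<in> E\<^sup>*"
proof -
  assume h: "(v, c) \<in> E" "(b, c) \<in> E\<^sup>+"
  from tranclD2[OF h(2)] obtain p where p: "(b, p) \<in> E\<^sup>*" "(p, c) \<in> E" by blast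
  have "p = v" using uniqp[OF p(2) h(1)] .
  then show ?thesis using p(1) by simp
qed

lemma uniq_child:
  assumes "(v, c) \<in> E" "(v, c') \<in> E" "(c, x) \<in> E\<^sup>*" "(c', x) \<in> E\<^sup>*"
  shows "c = c'"
proof (rule ccontr)
  assume ne: "c \<noteq> c'"
  from chain[OF assms(3,4)] show False
  proof
    assume "(c, c') \<in> E\<^sup>*"
    then have "(c, c') \<in> E\<^sup>+" using ne by (auto dest: rtranclD)
    then have "(c, v) \<in> E\<^sup>*" using last_edge assms(2) by auto
    then have "(v, v) \<in> E\<^sup>+" using assms(1) by (auto intro: rtrancl_into_trancl2)
    then show False using acyc by auto
  next
    assume "(c', c) \<in> E\<^sup>*"
    then have "(c', c) \<in> E\<^sup>+" using ne by (auto dest: rtranclD)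
    then have "(c', v) \<in> E\<^sup>*" using last_edge assms(1) by auto
    then have "(v, v) \<in> E\<^sup>+" using assms(2) by (auto intro: rtrancl_into_trancl2)
    then show False using acyc by auto
  qed
qed

lemma finE: "finite E"
  using finite_subset[OF EV] finV by blast

lemma wfc: "wf (E\<inverse>)"
proof (rule finite_acyclic_wf)
  show "finite (E\<inverse>)" using finE by simp
  have "acyclic E" unfolding acyclic_def using acyc by blast
  then show "acyclic (E\<inverse>)" by (simp add: acyclic_converse)
qed

lemma wfct: "wf ((E\<inverse>)\<^sup>+)"
  using wfc wf_trancl by blast

lemma rtrancl_V: "(a, z) \<in> E\<^sup>* \<Longrightarrow> a \<in> V \<Longrightarrow> z \<in> V"
proof (induction rule: rtrancl_induct)
  case (step y z)
  then show ?case using EV by blast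
qed simp

lemma leaf_below:
  assumes "a \<in> V" shows "\<exists>z\<in>leaves V E. (a, z) \<in> E\<^sup>*"
proof -
  have h: "a \<in> {z. (a, z) \<in> E\<^sup>*}" by simp
  have "\<exists>z\<in>{z. (a, z) \<in> E\<^sup>*}. \<forall>y. (y, z) \<in> E\<inverse> \<longrightarrow> y \<notin> {z. (a, z) \<in> E\<^sup>*}"
    using wfc[unfolded wf_eq_minimal, rule_format, OF h] .
  then obtain z where z: "(a, z) \<in> E\<^sup>*" and m: "\<And>y. (y, z) \<in> E\<inverse> \<Longrightarrow> y \<notin> {z. (a, z) \<in> E\<^sup>*}"
    by blast
  have "(z, y) \<notin> E" for y
  proof
    assume zy: "(z, y) \<in> E"
    then have "(a, y) \<in> E\<^sup>*" using z by (rule rtrancl_into_rtrancl[rotated])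
    moreover have "(y, z) \<in> E\<inverse>" using zy by simp
    ultimately show False using m by blast
  qed
  then have "children E z = {}" by (simp add: children_def)
  moreover have "z \<in> V" using rtrancl_V[OF z assms] .
  ultimately have "z \<in> leaves V E" by (simp add: leaves_def)
  then show ?thesis using z by blast
qed

lemma lca_prop:
  assumes ne: "X \<noteq> {}" and ex: "\<forall>x\<in>X. \<exists>a\<in>V. \<forall>w. le x w \<longleftrightarrow> (w, a) \<in> E\<^sup>*"
  shows "lca V le (tree_le E) X \<in> V \<and> (\<forall>x\<in>X. le x (lca V le (tree_le E) X)) \<and>
     (\<forall>w'\<in>V. (\<forall>x\<in>X. le x w') \<longrightarrow> tree_le E (lca V le (tree_le E) X) w')"
proof -
  obtain x0 where x0: "x0 \<in> X" using ne by blast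
  have "\<exists>a\<in>V. \<forall>w. le x0 w \<longleftrightarrow> (w, a) \<in> E\<^sup>*" using ex x0 by (rule bspec)
  then obtain a0 where a0V: "a0 \<in> V" and a0: "\<And>w. le x0 w \<longleftrightarrow> (w, a0) \<in> E\<^sup>*" by (elim bexE) simp
  define U where "U = {w\<in>V. \<forall>x\<in>X. le x w}"
  have "le x r0" if "x \<in> X" for x
  proof -
    have "\<exists>a\<in>V. \<forall>w. le x w \<longleftrightarrow> (w, a) \<in> E\<^sup>*" using ex that by (rule bspec)
    then obtain a where "a \<in> V" and aa: "\<And>w. le x w \<longleftrightarrow> (w, a) \<in> E\<^sup>*" by (elim bexE) simp
    then show ?thesis using reach[of a] by simp
  qed
  then have r0U: "r0 \<in> U" unfolding U_def using r0V by blast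
  have "\<exists>w\<in>U. \<forall>y. (y, w) \<in> (E\<inverse>)\<^sup>+ \<longrightarrow> y \<notin> U"
    using wfct[unfolded wf_eq_minimal, rule_format, OF r0U] .
  then obtain w where w: "w \<in> U" and m: "\<And>y. (y, w) \<in> (E\<inverse>)\<^sup>+ \<Longrightarrow> y \<notin> U"
    by (elim bexE) simp
  have wV: "w \<in> V" and wub: "\<And>x. x \<in> X \<Longrightarrow> le x w" using w unfolding U_def by simp_all
  have least: "(w', w) \<in> E\<^sup>*" if "w' \<in> U" for w'
  proof -
    have "le x0 w" "le x0 w'" using wub x0 that unfolding U_def by simp_all
    then have "(w, a0) \<in> E\<^sup>*" "(w', a0) \<in> E\<^sup>*" using a0 by simp_all
    from chain[OF this] show ?thesis
    proof
      assume h: "(w, w') \<in> E\<^sup>*"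
      show ?thesis
      proof (cases "w = w'")
        case False
        then have "(w, w') \<in> E\<^sup>+" using h by (auto dest: rtranclD)
        then have "(w', w) \<in> (E\<inverse>)\<^sup>+" by (simp add: trancl_converse)
        then have "w' \<notin> U" by (rule m)
        then show ?thesis using that by simp
      qed simp
    qed
  qed
  have P: "w \<in> V \<and> (\<forall>x\<in>X. le x w) \<and> (\<forall>w'\<in>V. (\<forall>x\<in>X. le x w') \<longrightarrow> tree_le E w w')"
  proof (intro conjI ballI impI)
    show "w \<in> V" by (rule wV)
    show "le x w" if "x \<in> X" for x using wub that .
    show "tree_le E w w'" if "w' \<in> V" "\<forall>x\<in>X. le x w'" for w'
    proof -
      have "w' \<in> U" unfolding U_def using that by simp
      then show ?thesis unfolding tree_le_def by (rule least)
    qed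
  qed
  have ex1: "\<exists>!w. w \<in> V \<and> (\<forall>x\<in>X. le x w) \<and> (\<forall>w'\<in>V. (\<forall>x\<in>X. le x w') \<longrightarrow> tree_le E w w')"
  proof (rule ex1I[of _ w])
    show "w \<in> V \<and> (\<forall>x\<in>X. le x w) \<and> (\<forall>w'\<in>V. (\<forall>x\<in>X. le x w') \<longrightarrow> tree_le E w w')" by (rule P)
  next
    fix y assume y: "y \<in> V \<and> (\<forall>x\<in>X. le x y) \<and> (\<forall>w'\<in>V. (\<forall>x\<in>X. le x w') \<longrightarrow> tree_le E y w')"
    then have "tree_le E y w" using wV wub by blast
    moreover have "tree_le E w y" using P y by blast
    ultimately show "y = w" unfolding tree_le_def by (rule ptree.antisym[OF ptree_axioms, rotated])
  qed
  show ?thesis unfolding lca_def using theI'[OF ex1] .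
qed

lemma lcaT_prop:
  assumes "X \<noteq> {}" "X \<subseteq> V"
  shows "lcaT V E X \<in> V \<and> (\<forall>x\<in>X. tree_le E x (lcaT V E X)) \<and>
     (\<forall>w'\<in>V. (\<forall>x\<in>X. tree_le E x w') \<longrightarrow> tree_le E (lcaT V E X) w')"
  unfolding lcaT_def
  by (rule lca_prop) (use assms in \<open>auto simp: tree_le_def\<close>)

lemma lcaS_prop:
  assumes "X \<noteq> {}" "X \<subseteq> vertex_elems V \<union> edge_elems E"
  shows "lcaS V E X \<in> V \<and> (\<forall>x\<in>X. elem_le E x (Vx (lcaS V E X))) \<and>
     (\<forall>w'\<in>V. (\<forall>x\<in>X. elem_le E x (Vx w')) \<longrightarrow> tree_le E (lcaS V E X) w')"
  unfolding lcaS_def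
proof (rule lca_prop[OF assms(1)], intro ballI)
  fix x assume "x \<in> X"
  then have "x \<in> vertex_elems V \<union> edge_elems E" using assms by auto
  then show "\<exists>a\<in>V. \<forall>w. elem_le E x (Vx w) \<longleftrightarrow> (w, a) \<in> E\<^sup>*"
    using EV by (auto simp: vertex_elems_def edge_elems_def tree_le_def)
qed

lemma lca_pair:
  assumes "x \<in> V" "y \<in> V" "(v, c1) \<in> E" "(v, c2) \<in> E" "c1 \<noteq> c2"
    "(c1, x) \<in> E\<^sup>*" "(c2, y) \<in> E\<^sup>*"
  shows "lcaT V E {x, y} = v"
proof -
  have vV: "v \<in> V" using assms(3) EV by blast
  have ub: "(v, x) \<in> E\<^sup>*" "(v, y) \<in> E\<^sup>*"
    using converse_rtrancl_into_rtrancl[OF assms(3) assms(6)]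
      converse_rtrancl_into_rtrancl[OF assms(4) assms(7)] by blast+
  let ?u = "lcaT V E {x, y}"
  have P: "?u \<in> V" "(?u, x) \<in> E\<^sup>*" "(?u, y) \<in> E\<^sup>*" "(v, ?u) \<in> E\<^sup>*"
  proof -
    have ne: "{x, y} \<noteq> {}" "{x, y} \<subseteq> V" using assms(1,2) by auto
    note L = lcaT_prop[OF ne]
    show "?u \<in> V" using L by blast
    show "(?u, x) \<in> E\<^sup>*" "(?u, y) \<in> E\<^sup>*" using L by (simp_all add: tree_le_def)
    have "\<forall>w'\<in>V. (\<forall>z\<in>{x, y}. tree_le E z w') \<longrightarrow> tree_le E ?u w'" using L by blast
    moreover have "\<forall>z\<in>{x, y}. tree_le E z v" using ub by (simp add: tree_le_def)
    ultimately have "tree_le E ?u v" using vV by blast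
    then show "(v, ?u) \<in> E\<^sup>*" by (simp add: tree_le_def)
  qed
  show ?thesis
  proof (rule ccontr)
    assume "?u \<noteq> v"
    then have "(v, ?u) \<in> E\<^sup>+" using P by (auto dest: rtranclD)
    then obtain c where c: "(v, c) \<in> E" "(c, ?u) \<in> E\<^sup>*" by (auto dest: tranclD)
    have "c = c1" using uniq_child[OF c(1) assms(3) rtrancl_trans[OF c(2) P(2)] assms(6)] .
    moreover have "c = c2" using uniq_child[OF c(1) assms(4) rtrancl_trans[OF c(2) P(3)] assms(7)] .
    ultimately show False using assms(5) by auto
  qed
qed

lemma L2:
  assumes sc: "(s, c) \<in> E" and el: "e \<in> vertex_elems V \<union> edge_elems E"
    and les: "elem_le E e (Vx s)" and nes: "e \<noteq> Vx s"
    and ca: "(c, \<alpha>) \<in> E\<^sup>*" and ae: "elem_le E (Vx \<alpha>) e"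
  shows "elem_le E e (Ed s c)"
proof (cases e)
  case (Vx w)
  then have h: "(s, w) \<in> E\<^sup>*" "w \<noteq> s" "(w, \<alpha>) \<in> E\<^sup>*" using les nes ae by (auto simp: tree_le_def)
  from chain[OF h(3) ca] show ?thesis
  proof
    assume wc: "(w, c) \<in> E\<^sup>*"
    show ?thesis
    proof (cases "w = c")
      case False
      then have "(w, c) \<in> E\<^sup>+" using wc by (auto dest: rtranclD)
      then have "(w, s) \<in> E\<^sup>*" using last_edge sc by auto
      then show ?thesis using antisym h by auto
    qed (use Vx in \<open>auto simp: tree_le_def\<close>)
  qed (use Vx in \<open>auto simp: tree_le_def\<close>)
next
  case (Ed p q)
  then have pq: "(p, q) \<in> E" using el by (auto simp: vertex_elems_def edge_elems_def)
  have h: "(s, p) \<in> E\<^sup>*" "(q, \<alpha>) \<in> E\<^sup>*" using les ae Ed by (auto simp: tree_le_def)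
  have sq: "(s, q) \<in> E\<^sup>+" using h(1) pq by auto
  show ?thesis
  proof (cases "q = c")
    case True
    then have "p = s" using uniqp pq sc by auto
    then show ?thesis using Ed True by simp
  next
    case False
    from chain[OF h(2) ca] show ?thesis
    proof
      assume "(q, c) \<in> E\<^sup>*"
      then have "(q, c) \<in> E\<^sup>+" using False by (auto dest: rtranclD)
      then have "(q, s) \<in> E\<^sup>*" using last_edge sc by auto
      then have "(s, s) \<in> E\<^sup>+" using sq by auto
      then show ?thesis using acyc by auto
    next
      assume "(c, q) \<in> E\<^sup>*"
      then have "(c, q) \<in> E\<^sup>+" using False by (auto dest: rtranclD)
      then have "(c, p) \<in> E\<^sup>*" using last_edge pq by auto
      then show ?thesis using Ed by (simp add: tree_le_def)
    qed
  qed
qed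

lemma Bc: "elem_le E e (Ed s c) \<Longrightarrow> e \<noteq> Ed s c \<Longrightarrow> elem_le E e (Vx c)"
  by (cases e) (auto simp: tree_le_def)

lemma L3:
  assumes sc: "(s, c) \<in> E" and el: "e1 \<in> vertex_elems V \<union> edge_elems E" "e2 \<in> vertex_elems V \<union> edge_elems E"
    and inc: "incomparable E e1 e2"
    and B: "elem_le E e1 (Ed s c)" "elem_le E e2 (Ed s c)"
  shows "lcaS V E {e1, e2} \<noteq> s"
proof
  assume eq: "lcaS V E {e1, e2} = s"
  have "e1 \<noteq> Ed s c" "e2 \<noteq> Ed s c" using inc B by (auto simp: incomparable_def)
  then have "elem_le E e1 (Vx c)" "elem_le E e2 (Vx c)" using Bc B by auto
  moreover have cV: "c \<in> V" using sc EV by auto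
  ultimately have "tree_le E (lcaS V E {e1, e2}) c" using lcaS_prop[of "{e1,e2}"] el by auto
  then have "(c, s) \<in> E\<^sup>*" using eq by (simp add: tree_le_def)
  then have "(s, s) \<in> E\<^sup>+" using sc by (auto intro: rtrancl_into_trancl2)
  then show False using acyc by auto
qed

end

theorem corollary1:
  fixes VT :: "'g set" and ET :: "('g \<times> 'g) set" and r0T :: 'g
    and VS :: "'s set" and ES :: "('s \<times> 's) set" and r0S :: 's
    and \<sigma> :: "'g \<Rightarrow> 's" and \<mu> :: "'g \<Rightarrow> 's elem" and A :: "'g set"
  assumes "planted_phylo VS ES r0S"
    and "gene_tree VT ET r0T \<sigma> (leaves VS ES)"
    and "reconc_map VT ET r0T \<sigma> VS ES r0S \<mu>"
    and "axiom_R4 VT ET r0T \<sigma> VS ES r0S \<mu>"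
    and "A \<subseteq> leaves VT ET"
    and "card (\<sigma> ` A) \<ge> 2"
    and "elem_less ES (Vx (lcaS VS ES (Vx ` \<sigma> ` A))) (\<mu> (lcaT VT ET A))"
  shows "\<mu> (lcaT VT ET A) \<in> edge_elems ES"
proof -
  have ppT: "planted_phylo VT ET r0T" and sig: "\<forall>v\<in>leaves VT ET. \<sigma> v \<in> leaves VS ES"
    using assms(2) by (auto simp: gene_tree_def)
  interpret T: ptree VT ET r0T by unfold_locales (rule ppT)
  interpret S: ptree VS ES r0S by unfold_locales (rule assms(1))
  have Rel: "\<forall>v\<in>VT. \<mu> v \<in> vertex_elems VS \<union> edge_elems ES"
    and R0: "\<forall>v\<in>VT. \<mu> v = Vx r0S \<longleftrightarrow> v = r0T"
    and R1: "\<forall>v\<in>leaves VT ET. \<mu> v = Vx (\<sigma> v)"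
    and R2: "\<forall>v\<in>VT. \<forall>w\<in>VT. tree_less ET v w \<longrightarrow> elem_le ES (\<mu> v) (\<mu> w)"
    and R3: "\<forall>v\<in>VT. (\<exists>x\<in>inner VS ES r0S. \<mu> v = Vx x) \<longrightarrow>
        (\<exists>v' v''. v' \<in> children ET v \<and> v'' \<in> children ET v \<and> v' \<noteq> v'' \<and>
            \<mu> v = Vx (lcaS VS ES {\<mu> v', \<mu> v''})) \<and>
        (\<forall>v'\<in>children ET v. \<forall>v''\<in>children ET v. v' \<noteq> v'' \<longrightarrow>
            incomparable ES (\<mu> v') (\<mu> v''))"
    using assms(3) unfolding reconc_map_def by blast+
  have mono: "elem_le ES (\<mu> a) (\<mu> b)" if "a \<in> VT" "b \<in> VT" "(b, a) \<in> ET\<^sup>*" for a b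
  proof (cases "a = b")
    case True then show ?thesis by (simp add: elem_le_refl)
  next
    case False then show ?thesis using R2 that by (auto simp: tree_less_def tree_le_def)
  qed
  have leafV: "leaves VT ET \<subseteq> VT" by (auto simp: leaves_def)
  have leafS: "leaves VS ES \<subseteq> VS" by (auto simp: leaves_def)
  have noch: "(x, a) \<notin> ET" if "x \<in> leaves VT ET" for x a
    using that by (auto simp: leaves_def children_def)
  have Ane: "A \<noteq> {}" using assms(6) by (cases "A = {}") auto
  have AV: "A \<subseteq> VT" using assms(5) leafV by auto
  define v where "v = lcaT VT ET A"
  have vV: "v \<in> VT" and vub: "\<And>x. x \<in> A \<Longrightarrow> (v, x) \<in> ET\<^sup>*"
    and vmin: "\<And>w. w \<in> VT \<Longrightarrow> (\<forall>x\<in>A. (w, x) \<in> ET\<^sup>*) \<Longrightarrow> (w, v) \<in> ET\<^sup>*"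
    using T.lcaT_prop[OF Ane AV] unfolding v_def tree_le_def by auto
  have xnv: "x \<noteq> v" if "x \<in> A" for x
  proof
    assume xv: "x = v"
    have "a = x" if "a \<in> A" for a
    proof -
      have "(x, a) \<in> ET\<^sup>*" using vub that xv by auto
      then show ?thesis using noch[of x] assms(5) \<open>x \<in> A\<close> by (auto elim: converse_rtranclE)
    qed
    then have "\<sigma> ` A \<subseteq> {\<sigma> x}" by auto
    then have "card (\<sigma> ` A) \<le> 1" using card_mono[of "{\<sigma> x}"] by fastforce
    then show False using assms(6) by auto
  qed
  have chx: "\<exists>c. (v, c) \<in> ET \<and> (c, x) \<in> ET\<^sup>*" if "x \<in> A" for x
  proof -
    have "(v, x) \<in> ET\<^sup>+" using vub[OF that] xnv[OF that] by (auto dest: rtranclD)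
    then show ?thesis by (auto dest: tranclD)
  qed
  obtain x y cx cy where xy: "x \<in> A" "y \<in> A" "(v, cx) \<in> ET" "(v, cy) \<in> ET" "cx \<noteq> cy"
    "(cx, x) \<in> ET\<^sup>*" "(cy, y) \<in> ET\<^sup>*"
  proof -
    obtain x0 where x0: "x0 \<in> A" using Ane by auto
    obtain c0 where c0: "(v, c0) \<in> ET" "(c0, x0) \<in> ET\<^sup>*" using chx[OF x0] by auto
    show ?thesis
    proof (cases "\<forall>a\<in>A. (c0, a) \<in> ET\<^sup>*")
      case True
      have "c0 \<in> VT" using c0 T.EV by auto
      then have "(v, c0) \<in> ET\<^sup>*" "(c0, v) \<in> ET\<^sup>*" using vmin True c0 by auto
      then have "v = c0" using T.antisym by auto
      then show ?thesis using c0 T.acyc by auto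
    next
      case False
      then obtain a where a: "a \<in> A" "(c0, a) \<notin> ET\<^sup>*" by auto
      obtain ca where ca: "(v, ca) \<in> ET" "(ca, a) \<in> ET\<^sup>*" using chx[OF a(1)] by auto
      have "c0 \<noteq> ca" using a ca by auto
      then show ?thesis using that[OF x0 a(1) c0(1) ca(1) _ c0(2) ca(2)] by auto
    qed
  qed
  have vnr: "v \<noteq> r0T"
  proof
    assume "v = r0T"
    then have "card (children ET v) = 1" using ppT by (simp add: planted_phylo_def)
    then obtain c where "children ET v = {c}" using card_1_singletonE by blast
    moreover have "cx \<in> children ET v" "cy \<in> children ET v" using xy by (auto simp: children_def)
    ultimately show False using xy(5) by auto
  qed
  show ?thesis
  proof (rule ccontr)
    assume nE: "\<mu> (lcaT VT ET A) \<notin> edge_elems ES"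
    have "\<mu> v \<in> vertex_elems VS" using Rel vV nE unfolding v_def by blast
    then obtain s where s: "\<mu> v = Vx s" "s \<in> VS" by (auto simp: vertex_elems_def)
    have sr: "s \<noteq> r0S" using R0 vV vnr s by auto
    have sigA: "Vx ` \<sigma> ` A \<noteq> {}" "Vx ` \<sigma> ` A \<subseteq> vertex_elems VS \<union> edge_elems ES"
      using Ane sig assms(5) leafS by (auto simp: vertex_elems_def)
    define t where "t = lcaS VS ES (Vx ` \<sigma> ` A)"
    have tV: "t \<in> VS" and tub: "\<And>x. x \<in> A \<Longrightarrow> (t, \<sigma> x) \<in> ES\<^sup>*"
      using S.lcaS_prop[OF sigA] unfolding t_def by (auto simp: tree_le_def)
    have "elem_less ES (Vx t) (Vx s)" using assms(7) s unfolding t_def v_def by simp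
    then have "(s, t) \<in> ES\<^sup>+" by (auto simp: elem_less_def tree_le_def dest: rtranclD)
    then obtain c where sc: "(s, c) \<in> ES" "(c, t) \<in> ES\<^sup>*" by (auto dest: tranclD)
    have "s \<notin> leaves VS ES" using sc by (auto simp: leaves_def children_def)
    then have sin: "s \<in> inner VS ES r0S" using s sr by (auto simp: inner_def)
    have pre: "\<exists>x\<in>inner VS ES r0S. \<mu> v = Vx x" using sin s by blast
    note R3v = R3[rule_format, OF vV pre]
    have inc: "\<forall>v'\<in>children ET v. \<forall>v''\<in>children ET v. v' \<noteq> v'' \<longrightarrow> incomparable ES (\<mu> v') (\<mu> v'')"
      using R3v by (rule conjunct2)
    obtain v1 v2 where v12: "v1 \<in> children ET v" "v2 \<in> children ET v" "v1 \<noteq> v2"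
      "\<mu> v = Vx (lcaS VS ES {\<mu> v1, \<mu> v2})"
      using R3v by (elim conjE exE) blast
    have chV: "k \<in> VT" if "k \<in> children ET v" for k using that T.EV by (auto simp: children_def)
    have chle: "elem_le ES (\<mu> k) (Vx s)" if "k \<in> children ET v" for k
      using mono[OF chV[OF that] vV] that s by (auto simp: children_def)
    have chne: "\<mu> k \<noteq> Vx s" if k: "k \<in> children ET v" for k
    proof
      assume ks: "\<mu> k = Vx s"
      obtain w where w: "w \<in> children ET v" "w \<noteq> k" "w \<in> {v1, v2}" using v12 by auto
      have "incomparable ES (\<mu> k) (\<mu> w)" using inc k w by auto
      then show False using chle[OF w(1)] ks by (auto simp: incomparable_def)
    qed
    have chel: "\<mu> k \<in> vertex_elems VS \<union> edge_elems ES" if "k \<in> children ET v" for k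
      using Rel chV[OF that] by auto
    have leafle: "elem_le ES (Vx (\<sigma> a)) (\<mu> k)" if "a \<in> leaves VT ET" "k \<in> VT" "(k, a) \<in> ET\<^sup>*" for a k
    proof -
      have "a \<in> VT" using that(1) leafV by blast
      then have "elem_le ES (\<mu> a) (\<mu> k)" using mono[of a k] that(2,3) by blast
      moreover have "\<mu> a = Vx (\<sigma> a)" using R1 that(1) by blast
      ultimately show ?thesis by simp
    qed
    define B where "B e = elem_le ES e (Ed s c)" for e
    have cxch: "cx \<in> children ET v" "cy \<in> children ET v" using xy by (auto simp: children_def)
    have xl: "x \<in> leaves VT ET" "y \<in> leaves VT ET" using xy assms(5) by auto
    have Bx: "B (\<mu> cx)"
      unfolding B_def
      by (rule S.L2[OF sc(1) chel[OF cxch(1)] chle[OF cxch(1)] chne[OF cxch(1)]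
            rtrancl_trans[OF sc(2) tub[OF xy(1)]] leafle[OF xl(1) chV[OF cxch(1)] xy(6)]])
    obtain vj where vj: "vj \<in> children ET v" "vj \<noteq> cx" "\<not> B (\<mu> vj)"
    proof -
      have "\<not> (B (\<mu> v1) \<and> B (\<mu> v2))"
      proof
        assume "B (\<mu> v1) \<and> B (\<mu> v2)"
        moreover have "incomparable ES (\<mu> v1) (\<mu> v2)" using inc v12(1,2,3) by blast
        ultimately have "lcaS VS ES {\<mu> v1, \<mu> v2} \<noteq> s"
          using S.L3[OF sc(1) chel[OF v12(1)] chel[OF v12(2)]] unfolding B_def by blast
        then show False using v12(4) s by auto
      qed
      then consider "\<not> B (\<mu> v1)" | "\<not> B (\<mu> v2)" by blast
      then show ?thesis
      proof cases
        case 1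
        then have "v1 \<noteq> cx" using Bx by auto
        then show ?thesis using that[OF v12(1) _ 1] by blast
      next
        case 2
        then have "v2 \<noteq> cx" using Bx by auto
        then show ?thesis using that[OF v12(2) _ 2] by blast
      qed
    qed
    obtain z where z: "z \<in> leaves VT ET" "(vj, z) \<in> ET\<^sup>*" using T.leaf_below[OF chV[OF vj(1)]] by auto
    have vjE: "(v, vj) \<in> ET" using vj by (auto simp: children_def)
    have l1: "lcaT VT ET {x, y} = v"
      using T.lca_pair[OF _ _ xy(3,4,5,6,7)] xl leafV by auto
    have l2: "lcaT VT ET {x, z} = v"
      using T.lca_pair[OF _ _ xy(3) vjE _ xy(6) z(2)] xl z leafV vj by auto
    have "\<mu> v \<in> Vx ` inner VS ES r0S" using s sin by auto
    then have meq: "lcaS VS ES {Vx (\<sigma> x), Vx (\<sigma> y)} = lcaS VS ES {Vx (\<sigma> x), Vx (\<sigma> z)}"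
      using assms(4)[unfolded axiom_R4_def, rule_format, OF xl(1) xl(2) z(1)] l1 l2 by simp
    define m where "m = lcaS VS ES {Vx (\<sigma> x), Vx (\<sigma> y)}"
    have sx: "\<sigma> x \<in> VS" "\<sigma> y \<in> VS" "\<sigma> z \<in> VS" using sig xl z leafS by auto
    have ne1: "{Vx (\<sigma> x), Vx (\<sigma> y)} \<noteq> {}" "{Vx (\<sigma> x), Vx (\<sigma> y)} \<subseteq> vertex_elems VS \<union> edge_elems ES"
      using sx by (auto simp: vertex_elems_def)
    have ne2: "{Vx (\<sigma> x), Vx (\<sigma> z)} \<noteq> {}" "{Vx (\<sigma> x), Vx (\<sigma> z)} \<subseteq> vertex_elems VS \<union> edge_elems ES"
      using sx by (auto simp: vertex_elems_def)
    have mmin: "\<forall>w'\<in>VS. (\<forall>e\<in>{Vx (\<sigma> x), Vx (\<sigma> y)}. elem_le ES e (Vx w')) \<longrightarrow> tree_le ES m w'"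
      using S.lcaS_prop[OF ne1] unfolding m_def by blast
    have "\<forall>e\<in>{Vx (\<sigma> x), Vx (\<sigma> y)}. elem_le ES e (Vx t)"
      using tub[OF xy(1)] tub[OF xy(2)] by (simp add: tree_le_def)
    then have "tree_le ES m t" using mmin tV by blast
    moreover have "elem_le ES (Vx (\<sigma> z)) (Vx m)"
    proof -
      have "\<forall>e\<in>{Vx (\<sigma> x), Vx (\<sigma> z)}. elem_le ES e (Vx (lcaS VS ES {Vx (\<sigma> x), Vx (\<sigma> z)}))"
        using S.lcaS_prop[OF ne2] by blast
      then show ?thesis unfolding m_def meq by blast
    qed
    ultimately have "(t, m) \<in> ES\<^sup>*" "(m, \<sigma> z) \<in> ES\<^sup>*" by (simp_all add: tree_le_def)
    then have cz: "(c, \<sigma> z) \<in> ES\<^sup>*" using sc(2) by (meson rtrancl_trans)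
    have "B (\<mu> vj)"
      unfolding B_def
      by (rule S.L2[OF sc(1) chel[OF vj(1)] chle[OF vj(1)] chne[OF vj(1)] cz
            leafle[OF z(1) chV[OF vj(1)] z(2)]])
    then show False using vj by auto
  qed
qed

end
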